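(* Let $(X,G)$ be a minimal topological dynamical system and let $Y=\{y\in X_{eq}:\pi_{eq}^{-1}(y)\in\mathcal X_{eq}^{\mathrm{meas}}\}$. Then $Y$ is a dense $G_\delta$ subset of $X_{eq}$ with $\nu_{eq}(Y)=1$.
   Context: $G$ is an infinite countable discrete group; a tds $(X,G)$ is a compact metric space with a $G$-action by homeomorphisms; minimal means no proper nonempty closed invariant subset. $\pi_{eq}:X\to X_{eq}$ is the factor map onto the maximal equicontinuous factor, $\nu_{eq}$ the unique invariant probability measure of $(X_{eq},G)$. $2^X$ is the space of nonempty closed subsets with the Hausdorff metric $d_H$. $\mathcal X=\overline{\{\pi_{eq}^{-1}(y):y\in X_{eq}\}}\subset 2^X$; for $E\in\mathcal X$, $\pi_{\mathcal X}(E)$ is the single point $\pi_{eq}(E)$. $\mathcal X_{eq}^{\mathrm{meas}}=\{E\in\mathcal X:\nu_{eq}(\pi_{\mathcal X}(B^{\mathcal X}_\epsilon(E)))>0\ \forall\epsilon>0\}$, $B^{\mathcal X}_\epsilon(E)$ the open $d_H$-ball in $\mathcal X$. *)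

theory Defs
  imports "HOL-Analysis.Analysis" "HOL-Probability.Probability"
begin

text \<open>The group G is a type of class group_add (written additively, NOT assumed
commutative), countable; infinitude is an explicit hypothesis of the theorem.\<close>

definition tds :: "'x::metric_space set \<Rightarrow> ('g::group_add \<Rightarrow> 'x \<Rightarrow> 'x) \<Rightarrow> bool" where
  "tds X act \<longleftrightarrow> compact X \<and> X \<noteq> {} \<and>
     (\<forall>g. continuous_on X (act g) \<and> act g ` X \<subseteq> X) \<and>
     (\<forall>x\<in>X. act 0 x = x) \<and>
     (\<forall>g h. \<forall>x\<in>X. act (g + h) x = act g (act h x))"

definition minimal_tds :: "'x::metric_space set \<Rightarrow> ('g::group_add \<Rightarrow> 'x \<Rightarrow> 'x) \<Rightarrow> bool" where
  "minimal_tds X act \<longleftrightarrow> tds X act \<and>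
     (\<forall>A. A \<subseteq> X \<and> A \<noteq> {} \<and> closed A \<and> (\<forall>g. act g ` A \<subseteq> A) \<longrightarrow> A = X)"

definition equicontinuous_tds :: "'x::metric_space set \<Rightarrow> ('g::group_add \<Rightarrow> 'x \<Rightarrow> 'x) \<Rightarrow> bool" where
  "equicontinuous_tds X act \<longleftrightarrow> tds X act \<and>
     (\<forall>x\<in>X. \<forall>e>0. \<exists>d>0. \<forall>x'\<in>X. dist x x' < d \<longrightarrow> (\<forall>g. dist (act g x) (act g x') < e))"

definition factor_map ::
  "'x::metric_space set \<Rightarrow> ('g::group_add \<Rightarrow> 'x \<Rightarrow> 'x) \<Rightarrow>
   'z::metric_space set \<Rightarrow> ('g \<Rightarrow> 'z \<Rightarrow> 'z) \<Rightarrow> ('x \<Rightarrow> 'z) \<Rightarrow> bool" where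
  "factor_map X act Z actZ \<theta> \<longleftrightarrow> tds X act \<and> tds Z actZ \<and>
     continuous_on X \<theta> \<and> \<theta> ` X = Z \<and>
     (\<forall>g. \<forall>x\<in>X. \<theta> (act g x) = actZ g (\<theta> x))"

text \<open>Every compact metric space is
homeomorphic to a subset of the Hilbert cube, and equicontinuity is a topological notion
on compact spaces, so all equicontinuous factors are represented (up to conjugacy) by
factors whose phase space lies in the type nat => real (product topology/metric).\<close>
definition max_eq_factor ::
  "'x::metric_space set \<Rightarrow> ('g::group_add \<Rightarrow> 'x \<Rightarrow> 'x) \<Rightarrow>
   'y::metric_space set \<Rightarrow> ('g \<Rightarrow> 'y \<Rightarrow> 'y) \<Rightarrow> ('x \<Rightarrow> 'y) \<Rightarrow> bool" where
  "max_eq_factor X act Xeq actY \<pi> \<longleftrightarrow>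
     factor_map X act Xeq actY \<pi> \<and> equicontinuous_tds Xeq actY \<and>
     (\<forall>(Z :: (nat \<Rightarrow> real) set) actZ \<theta>.
        factor_map X act Z actZ \<theta> \<and> equicontinuous_tds Z actZ \<longrightarrow>
        (\<exists>\<psi>. factor_map Xeq actY Z actZ \<psi> \<and> (\<forall>x\<in>X. \<theta> x = \<psi> (\<pi> x))))"

definition invariant_prob :: "'y::metric_space set \<Rightarrow> ('g \<Rightarrow> 'y \<Rightarrow> 'y) \<Rightarrow> 'y measure \<Rightarrow> bool" where
  "invariant_prob Y actY \<mu> \<longleftrightarrow> prob_space \<mu> \<and> space \<mu> = Y \<and>
     sets \<mu> = sets (restrict_space borel Y) \<and>
     (\<forall>g. \<forall>A\<in>sets \<mu>. measure \<mu> {y\<in>Y. actY g y \<in> A} = measure \<mu> A)"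

definition hausdist :: "'a::metric_space set \<Rightarrow> 'a set \<Rightarrow> real" where
  "hausdist A B = max (SUP a\<in>A. infdist a B) (SUP b\<in>B. infdist b A)"

definition fiber :: "'x set \<Rightarrow> ('x \<Rightarrow> 'y) \<Rightarrow> 'y \<Rightarrow> 'x set" where
  "fiber X \<pi> y = {x\<in>X. \<pi> x = y}"

definition calX :: "'x::metric_space set \<Rightarrow> ('x \<Rightarrow> 'y) \<Rightarrow> 'y set \<Rightarrow> 'x set set" where
  "calX X \<pi> Xeq = {E. E \<subseteq> X \<and> E \<noteq> {} \<and> closed E \<and>
      (\<forall>e>0. \<exists>y\<in>Xeq. hausdist E (fiber X \<pi> y) < e)}"

definition pi_calX :: "('x \<Rightarrow> 'y) \<Rightarrow> 'x set \<Rightarrow> 'y" where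
  "pi_calX \<pi> E = the_elem (\<pi> ` E)"

definition ball_calX :: "'x::metric_space set \<Rightarrow> ('x \<Rightarrow> 'y) \<Rightarrow> 'y set \<Rightarrow> 'x set \<Rightarrow> real \<Rightarrow> 'x set set" where
  "ball_calX X \<pi> Xeq E e = {F\<in>calX X \<pi> Xeq. hausdist E F < e}"

definition calX_meas ::
  "'x::metric_space set \<Rightarrow> ('x \<Rightarrow> 'y) \<Rightarrow> 'y set \<Rightarrow> 'y measure \<Rightarrow> 'x set set" where
  "calX_meas X \<pi> Xeq \<nu> = {E\<in>calX X \<pi> Xeq.
      \<forall>e>0. measure \<nu> (pi_calX \<pi> ` ball_calX X \<pi> Xeq E e) > 0}"

end

theory Submission
  imports Defs "HOL-Library.Diagonal_Subsequence"
begin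

lemma infdist_attained:
  assumes "compact A" "A \<noteq> {}"
  shows "\<exists>a\<in>A. infdist x A = dist x a"
proof -
  have "continuous_on A (\<lambda>b. dist x b)" by (intro continuous_intros)
  then obtain a where a: "a \<in> A" "\<And>b. b \<in> A \<Longrightarrow> dist x a \<le> dist x b"
    using continuous_attains_inf[OF assms] by blast
  have "infdist x A \<le> dist x a" using a(1) by (rule infdist_le)
  moreover have "dist x a \<le> infdist x A"
    unfolding infdist_notempty[OF assms(2)] using a assms(2) by (intro cINF_greatest) auto
  ultimately show ?thesis using a by auto
qed

lemma hd_bdd:
  assumes "compact A"
  shows "bdd_above ((\<lambda>a. infdist a B) ` A)"
proof -
  have "compact ((\<lambda>a. infdist a B) ` A)"
    by (intro compact_continuous_image continuous_intros assms)
  then show ?thesis by (intro bounded_imp_bdd_above compact_imp_bounded)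
qed

lemma hd_ge1:
  assumes "a \<in> A" "compact A" "compact B"
  shows "infdist a B \<le> hausdist A B"
proof -
  have "infdist a B \<le> (SUP a\<in>A. infdist a B)"
    using assms hd_bdd by (intro cSUP_upper) auto
  then show ?thesis unfolding hausdist_def by linarith
qed

lemma hd_ge2:
  assumes "b \<in> B" "compact A" "compact B"
  shows "infdist b A \<le> hausdist A B"
proof -
  have "infdist b A \<le> (SUP b\<in>B. infdist b A)"
    using assms hd_bdd by (intro cSUP_upper) auto
  then show ?thesis unfolding hausdist_def by linarith
qed

lemma hd_le:
  assumes "A \<noteq> {}" "B \<noteq> {}" "\<And>a. a \<in> A \<Longrightarrow> infdist a B \<le> e" "\<And>b. b \<in> B \<Longrightarrow> infdist b A \<le> e"
  shows "hausdist A B \<le> e"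
  unfolding hausdist_def using assms by (intro max.boundedI cSUP_least) auto

lemma hd_sym: "hausdist A B = hausdist B A"
  unfolding hausdist_def by (simp add: max.commute)

lemma hd_nonneg:
  assumes "A \<noteq> {}" "compact A" "compact B"
  shows "0 \<le> hausdist A B"
  using assms hd_ge1[of _ A B] infdist_nonneg by (meson all_not_in_conv order_trans)

lemma hd_refl:
  assumes "A \<noteq> {}" "compact A"
  shows "hausdist A A = 0"
  using hd_le[of A A 0] hd_nonneg[of A A] assms by auto

lemma infdist_via:
  assumes "B \<noteq> {}" "\<And>b. b \<in> B \<Longrightarrow> infdist b C \<le> h"
  shows "infdist x C \<le> infdist x B + h"
proof -
  have "infdist x C - h \<le> dist x b" if "b \<in> B" for b
    using infdist_triangle[of x C b] assms(2)[OF that] by (simp add: dist_commute)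
  then have "infdist x C - h \<le> (INF b\<in>B. dist x b)"
    using assms(1) by (intro cINF_greatest) auto
  then show ?thesis unfolding infdist_notempty[OF assms(1)] by linarith
qed

lemma hd_triangle:
  assumes "A \<noteq> {}" "B \<noteq> {}" "C \<noteq> {}" "compact A" "compact B" "compact C"
  shows "hausdist A C \<le> hausdist A B + hausdist B C"
proof (rule hd_le)
  fix a assume a: "a \<in> A"
  have "infdist a C \<le> infdist a B + hausdist B C"
    using assms by (intro infdist_via hd_ge1) auto
  also have "infdist a B \<le> hausdist A B" using hd_ge1 a assms by auto
  finally show "infdist a C \<le> hausdist A B + hausdist B C" by simp
next
  fix c assume c: "c \<in> C"
  have "infdist c A \<le> infdist c B + hausdist A B"
    using assms by (intro infdist_via hd_ge2) auto
  also have "infdist c B \<le> hausdist B C" using hd_ge2 c assms by auto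
  finally show "infdist c A \<le> hausdist A B + hausdist B C" by simp
qed (use assms in auto)

lemma dense_seq_compact:
  fixes X :: "'x::metric_space set"
  assumes "compact X" "X \<noteq> {}"
  shows "\<exists>r::nat\<Rightarrow>'x. range r \<subseteq> X \<and> (\<forall>x\<in>X. \<forall>e>0. \<exists>n. dist x (r n) < e)"
proof -
  have "\<forall>n::nat. \<exists>K. finite K \<and> K \<subseteq> X \<and> X \<subseteq> (\<Union>x\<in>K. ball x (1/(Suc n)))"
    using seq_compact_imp_totally_bounded[OF compact_imp_seq_compact[OF assms(1)]] by simp
  then obtain K where K: "\<And>n. finite (K n)" "\<And>n. K n \<subseteq> X" "\<And>n. X \<subseteq> (\<Union>x\<in>K n. ball x (1/(Suc n)))"
    by metis
  define D where "D = (\<Union>n. K n)"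
  have cD: "countable D" unfolding D_def using K(1) by (intro countable_UN) (auto intro: countable_finite)
  have neD: "D \<noteq> {}" using K(3)[of 0] assms(2) unfolding D_def by auto
  define r where "r = from_nat_into D"
  have rD: "range r = D" unfolding r_def using cD neD by simp
  have "range r \<subseteq> X" using rD K(2) unfolding D_def by auto
  moreover have "\<forall>x\<in>X. \<forall>e>0. \<exists>n. dist x (r n) < e"
  proof (intro ballI allI impI)
    fix x e assume x: "x \<in> X" and e: "(0::real) < e"
    obtain m where m: "inverse (real (Suc m)) < e" using reals_Archimedean e by blast
    obtain k where k: "k \<in> K m" "x \<in> ball k (1/(Suc m))" using K(3)[of m] x by auto
    have "k \<in> range r" using k rD unfolding D_def by auto
    then obtain n where n: "k = r n" by auto
    have "dist x k < 1/real (Suc m)" using k(2) by (simp add: dist_commute)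
    moreover have "1/real (Suc m) < e" using m by (simp add: inverse_eq_divide)
    ultimately have "dist x (r n) < e" using n by simp
    then show "\<exists>n. dist x (r n) < e" by blast
  qed
  ultimately show ?thesis by blast
qed

lemma hd_select:
  fixes X :: "'x::metric_space set" and A :: "nat \<Rightarrow> 'x set"
  assumes X: "compact X" and A: "\<And>k. A k \<noteq> {}" "\<And>k. closed (A k)" "\<And>k. A k \<subseteq> X"
  shows "\<exists>s B. strict_mono s \<and> B \<noteq> {} \<and> closed B \<and> B \<subseteq> X \<and> (\<lambda>k. hausdist (A (s k)) B) \<longlonglongrightarrow> 0"
proof -
  have neX: "X \<noteq> {}" using A(1)[of 0] A(3)[of 0] by auto
  obtain r :: "nat \<Rightarrow> 'x" where rX: "range r \<subseteq> X" and rd: "\<And>x e. x \<in> X \<Longrightarrow> e > 0 \<Longrightarrow> \<exists>n. dist x (r n) < e"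
    using dense_seq_compact[OF X neX] by blast
  define M where "M = diameter X"
  have bX: "bounded X" using X by (rule compact_imp_bounded)
  have fb: "infdist x (A k) \<in> {-M..M}" if "x \<in> X" for x k
  proof -
    obtain a where "a \<in> A k" using A(1) by blast
    then have "infdist x (A k) \<le> dist x a" by (rule infdist_le)
    also have "dist x a \<le> M" unfolding M_def
      using that A(3) \<open>a \<in> A k\<close> by (intro diameter_bounded_bound[OF bX]) auto
    finally have "infdist x (A k) \<le> M" .
    moreover have "0 \<le> infdist x (A k)" by (rule infdist_nonneg)
    ultimately show ?thesis by auto
  qed
  let ?P = "\<lambda>n. \<lambda>s. convergent (\<lambda>k. infdist (r n) (A (s k)))"
  interpret nat: subseqs ?P
  proof (unfold convergent_def, unfold subseqs_def, auto)
    fix n :: nat and s :: "nat \<Rightarrow> nat" assume s: "strict_mono s"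
    have "bounded {-M..M}"
      using bounded_closed_interval by auto
    moreover have "\<And>k. infdist (r n) (A (s k)) \<in> {-M..M}"
      using fb[of "r n"] rX by (simp add: range_subsetD)
    ultimately have "\<exists>l s'. strict_mono s' \<and> ((\<lambda>k. infdist (r n) (A (s k))) \<circ> s') \<longlonglongrightarrow> l"
      using compact_Icc compact_imp_seq_compact seq_compactE by metis
    thus "\<exists>s'. strict_mono (s'::nat\<Rightarrow>nat) \<and> (\<exists>l. (\<lambda>k. infdist (r n) (A (s (s' k)))) \<longlonglongrightarrow> l)"
      by (auto simp: comp_def)
  qed
  define d where "d = nat.diagseq"
  have subseq: "strict_mono d"
    unfolding d_def using nat.subseq_diagseq by auto
  have rat_cnv: "?P n d" for n
  proof -
    have Pn_seqseq: "?P n (nat.seqseq (Suc n))"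
      by (rule nat.seqseq_holds)
    have 1: "(\<lambda>k. infdist (r n) (A ((nat.seqseq (Suc n) \<circ> (\<lambda>k. nat.fold_reduce (Suc n) k
      (Suc n + k))) k))) = (\<lambda>k. infdist (r n) (A (nat.seqseq (Suc n) k))) \<circ>
      (\<lambda>k. nat.fold_reduce (Suc n) k (Suc n + k))"
      by auto
    have 2: "?P n (d \<circ> ((+) (Suc n)))"
      unfolding d_def nat.diagseq_seqseq 1
      by (intro convergent_subseq_convergent Pn_seqseq nat.subseq_diagonal_rest)
    then obtain L where 3: "(\<lambda>na. infdist (r n) (A (d (na + Suc n)))) \<longlonglongrightarrow> L"
      by (auto simp: add.commute dest: convergentD)
    then have "(\<lambda>k. infdist (r n) (A (d k))) \<longlonglongrightarrow> L"
      by (rule LIMSEQ_offset)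
    then show ?thesis
      by (auto simp: convergent_def)
  qed
  define f where "f = (\<lambda>k x. infdist x (A (d k)))"
  have lip: "\<bar>f k x - f k y\<bar> \<le> dist x y" for k x y
    unfolding f_def by (rule infdist_triangle_abs)
  have conv: "convergent (\<lambda>k. f k x)" if x: "x \<in> X" for x
  proof -
    have "Cauchy (\<lambda>k. f k x)"
    proof (rule CauchyI)
      fix e :: real assume e: "0 < e"
      obtain n where n: "dist x (r n) < e/3" using rd[OF x, of "e/3"] e by auto
      have "Cauchy (\<lambda>k. f k (r n))" using rat_cnv[of n] unfolding f_def
        by (simp add: Cauchy_convergent_iff)
      then obtain N where N: "\<And>m k. m \<ge> N \<Longrightarrow> k \<ge> N \<Longrightarrow> norm (f m (r n) - f k (r n)) < e/3"
        using CauchyD[of "\<lambda>k. f k (r n)" "e/3"] e by auto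
      have "norm (f m x - f k x) < e" if "m \<ge> N" "k \<ge> N" for m k
        using N[OF that] lip[of m x "r n"] lip[of k x "r n"] n by (simp add: abs_if split: if_splits)
      then show "\<exists>N. \<forall>m\<ge>N. \<forall>k\<ge>N. norm (f m x - f k x) < e" by blast
    qed
    then show ?thesis by (simp add: Cauchy_convergent_iff)
  qed
  define g where "g = (\<lambda>x. lim (\<lambda>k. f k x))"
  have lg: "(\<lambda>k. f k x) \<longlonglongrightarrow> g x" if "x \<in> X" for x
    unfolding g_def using conv[OF that] convergent_LIMSEQ_iff by auto
  have g_nonneg: "0 \<le> g x" if "x \<in> X" for x
    using lg[OF that] by (rule LIMSEQ_le_const) (auto simp: f_def infdist_nonneg)
  have g_lip: "\<bar>g x - g y\<bar> \<le> dist x y" if "x \<in> X" "y \<in> X" for x y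
  proof -
    have "(\<lambda>k. \<bar>f k x - f k y\<bar>) \<longlonglongrightarrow> \<bar>g x - g y\<bar>"
      by (intro tendsto_intros lg that)
    then show ?thesis by (rule LIMSEQ_le_const2) (use lip in auto)
  qed
  have g_cont: "continuous_on X g"
    unfolding continuous_on_iff
  proof (intro ballI allI impI)
    fix x e assume "x \<in> X" "(0::real) < e"
    then show "\<exists>d>0. \<forall>x'\<in>X. dist x' x < d \<longrightarrow> dist (g x') (g x) < e"
    proof (intro exI[of _ e] conjI ballI impI)
      fix x' assume "x' \<in> X" "dist x' x < e"
      then show "dist (g x') (g x) < e" using g_lip[of x' x] \<open>x \<in> X\<close> by (simp add: dist_real_def)
    qed (use \<open>0 < e\<close> in simp)
  qed
  have unif: "\<exists>N. \<forall>k\<ge>N. \<forall>x\<in>X. \<bar>f k x - g x\<bar> < e" if e: "e > 0" for e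
  proof -
    have "X \<subseteq> (\<Union>n\<in>UNIV. ball (r n) (e/3))"
    proof
      fix x assume "x \<in> X"
      then obtain n where "dist x (r n) < e/3" using rd[of x "e/3"] e by auto
      then have "x \<in> ball (r n) (e/3)" by (simp add: dist_commute)
      then show "x \<in> (\<Union>n\<in>UNIV. ball (r n) (e/3))" by blast
    qed
    then have "\<exists>C. C \<subseteq> UNIV \<and> finite C \<and> X \<subseteq> (\<Union>n\<in>C. ball (r n) (e/3))"
      by (rule compactE_image[OF X, rotated]) auto
    then obtain C where C: "C \<subseteq> UNIV" "finite C" "X \<subseteq> (\<Union>n\<in>C. ball (r n) (e/3))"
      by blast
    have "\<forall>n\<in>C. eventually (\<lambda>k. \<bar>f k (r n) - g (r n)\<bar> < e/3) sequentially"
    proof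
      fix n assume "n \<in> C"
      have "r n \<in> X" using rX by (simp add: range_subsetD)
      then have "(\<lambda>k. f k (r n)) \<longlonglongrightarrow> g (r n)" by (rule lg)
      from tendstoD[OF this, of "e/3"] e show "eventually (\<lambda>k. \<bar>f k (r n) - g (r n)\<bar> < e/3) sequentially"
        by (simp add: dist_real_def)
    qed
    then have "eventually (\<lambda>k. \<forall>n\<in>C. \<bar>f k (r n) - g (r n)\<bar> < e/3) sequentially"
      by (rule eventually_ball_finite[OF C(2)])
    then obtain N where N: "\<And>k n. k \<ge> N \<Longrightarrow> n \<in> C \<Longrightarrow> \<bar>f k (r n) - g (r n)\<bar> < e/3"
      unfolding eventually_sequentially by blast
    have "\<bar>f k x - g x\<bar> < e" if kN: "k \<ge> N" and xX: "x \<in> X" for k x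
    proof -
      obtain n where n: "n \<in> C" "dist (r n) x < e/3" using C(3) xX by auto
      have "r n \<in> X" using rX by (simp add: range_subsetD)
      then have a3: "\<bar>g (r n) - g x\<bar> \<le> dist (r n) x" using g_lip xX by auto
      have a1: "\<bar>f k x - f k (r n)\<bar> \<le> dist (r n) x" using lip[of k x "r n"] by (simp add: dist_commute)
      have a2: "\<bar>f k (r n) - g (r n)\<bar> < e/3" using N[OF kN n(1)] .
      show ?thesis using a1 a2 a3 n(2) unfolding abs_less_iff abs_le_iff by linarith
    qed
    then show ?thesis by blast
  qed
  define B where "B = {x\<in>X. g x = 0}"
  have clX: "closed X" using X by (rule compact_imp_closed)
  have B_closed: "closed B"
  proof -
    have "closed (X \<inter> g -` {0})" by (rule continuous_closed_preimage[OF g_cont clX]) simp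
    moreover have "X \<inter> g -` {0} = B" unfolding B_def by auto
    ultimately show ?thesis by simp
  qed
  have B_ne: "B \<noteq> {}"
  proof -
    obtain x0 where x0: "x0 \<in> X" "\<And>y. y \<in> X \<Longrightarrow> g x0 \<le> g y"
      using continuous_attains_inf[OF X neX g_cont] by blast
    have "g x0 = 0"
    proof (rule ccontr)
      assume "g x0 \<noteq> 0"
      then have pos: "g x0 > 0" using g_nonneg[OF x0(1)] by simp
      obtain N where N: "\<And>k x. k \<ge> N \<Longrightarrow> x \<in> X \<Longrightarrow> \<bar>f k x - g x\<bar> < g x0"
        using unif[OF pos] by blast
      obtain a where a: "a \<in> A (d N)" using A(1) by blast
      then have aX: "a \<in> X" using A(3) by auto
      have "f N a = 0" unfolding f_def using a by simp
      then show False using N[of N a] aX x0(2)[OF aX] by auto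
    qed
    then show ?thesis unfolding B_def using x0 by auto
  qed
  have BX: "B \<subseteq> X" unfolding B_def by auto
  have cB: "compact B" using BX B_closed X compact_Int_closed[of X B] by (simp add: Int_absorb1)
  have cA: "compact (A k)" for k using A(2,3) X compact_Int_closed[of X "A k"] by (simp add: Int_absorb1)
  have lim0: "(\<lambda>k. hausdist (A (d k)) B) \<longlonglongrightarrow> 0"
  proof (rule LIMSEQ_I)
    fix e :: real assume e: "0 < e"
    define K where "K = {x\<in>X. e/2 \<le> infdist x B}"
    have "closed (X \<inter> (\<lambda>x. infdist x B) -` {e/2..})"
      by (intro continuous_closed_preimage clX continuous_intros closed_atLeast)
    moreover have "X \<inter> (\<lambda>x. infdist x B) -` {e/2..} = K" unfolding K_def by auto
    ultimately have "closed K" by simp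
    then have cK: "compact K" using X compact_Int_closed[of X K] by (simp add: K_def Int_absorb1)
    have KX: "K \<subseteq> X" unfolding K_def by auto
    have "\<exists>\<delta>>0. \<forall>x\<in>K. \<delta> \<le> g x"
    proof (cases "K = {}")
      case True then show ?thesis by (intro exI[of _ 1]) auto
    next
      case False
      obtain x1 where x1: "x1 \<in> K" "\<And>y. y \<in> K \<Longrightarrow> g x1 \<le> g y"
        using continuous_attains_inf[OF cK False continuous_on_subset[OF g_cont KX]] by blast
      have "x1 \<notin> B" using x1(1) e unfolding K_def by auto
      moreover have "x1 \<in> X" using x1(1) KX by auto
      ultimately have "g x1 \<noteq> 0" unfolding B_def by auto
      then have "g x1 > 0" using g_nonneg[OF \<open>x1 \<in> X\<close>] by simp
      then show ?thesis using x1 by blast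
    qed
    then obtain \<delta> where \<delta>: "\<delta> > 0" "\<And>x. x \<in> K \<Longrightarrow> \<delta> \<le> g x" by blast
    obtain N where N: "\<And>k x. k \<ge> N \<Longrightarrow> x \<in> X \<Longrightarrow> \<bar>f k x - g x\<bar> < min \<delta> (e/2)"
      using unif[of "min \<delta> (e/2)"] \<delta> e by auto
    have "norm (hausdist (A (d k)) B - 0) < e" if k: "k \<ge> N" for k
    proof -
      have "hausdist (A (d k)) B \<le> e/2"
      proof (rule hd_le)
        fix a assume a: "a \<in> A (d k)"
        then have aX: "a \<in> X" using A(3) by auto
        have "f k a = 0" unfolding f_def using a by simp
        then have "g a < \<delta>" using N[OF k aX] by auto
        then have "\<not> \<delta> \<le> g a" by simp
        then have "a \<notin> K" using \<delta>(2) by blast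
        then show "infdist a B \<le> e/2" using aX unfolding K_def by auto
      next
        fix b assume b: "b \<in> B"
        then have "\<bar>f k b\<bar> < e/2" using N[OF k, of b] unfolding B_def by auto
        then show "infdist b (A (d k)) \<le> e/2" unfolding f_def by simp
      qed (use A(1) B_ne in auto)
      moreover have "0 \<le> hausdist (A (d k)) B" by (rule hd_nonneg[OF A(1) cA cB])
      ultimately show ?thesis using e by simp
    qed
    then show "\<exists>no. \<forall>n\<ge>no. norm (hausdist (A (d n)) B - 0) < e" by blast
  qed
  show ?thesis by (rule exI[of _ d], rule exI[of _ B]) (use subseq B_ne B_closed BX lim0 in simp)
qed

locale hsetting =
  fixes X :: "'x::metric_space set" and \<pi> :: "'x \<Rightarrow> 'y::metric_space" and Xeq :: "'y set"
  assumes cX: "compact X" and cont: "continuous_on X \<pi>" and img: "\<pi> ` X = Xeq"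
begin

lemma cXeq: "compact Xeq" using compact_continuous_image[OF cont cX] img by simp

lemma clX: "closed X" using cX by (rule compact_imp_closed)

lemma compact_closed_sub: "closed S \<Longrightarrow> S \<subseteq> X \<Longrightarrow> compact S"
  using compact_Int_closed[OF cX, of S] by (simp add: Int_absorb1)

lemma fib_closed: "closed (fiber X \<pi> y)"
proof -
  have "closed (X \<inter> \<pi> -` {y})" by (rule continuous_closed_preimage[OF cont clX]) simp
  moreover have "X \<inter> \<pi> -` {y} = fiber X \<pi> y" unfolding fiber_def by auto
  ultimately show ?thesis by simp
qed

lemma fib_sub: "fiber X \<pi> y \<subseteq> X" unfolding fiber_def by auto

lemma fib_compact: "compact (fiber X \<pi> y)"
  using compact_closed_sub[OF fib_closed fib_sub] .

lemma fib_ne: "y \<in> Xeq \<Longrightarrow> fiber X \<pi> y \<noteq> {}"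
  using img unfolding fiber_def by auto

lemma fib_calX: assumes y: "y \<in> Xeq" shows "fiber X \<pi> y \<in> calX X \<pi> Xeq"
  unfolding calX_def using fib_sub fib_ne[OF y] fib_closed hd_refl[OF fib_ne[OF y] fib_compact] y
  by (auto intro!: bexI[of _ y])

lemma calX_basic: "F \<in> calX X \<pi> Xeq \<Longrightarrow> compact F \<and> F \<noteq> {} \<and> F \<subseteq> X"
  unfolding calX_def using compact_closed_sub by auto

lemma calX_pt:
  assumes F: "F \<in> calX X \<pi> Xeq"
  shows "pi_calX \<pi> F \<in> Xeq \<and> \<pi> ` F = {pi_calX \<pi> F}"
proof -
  have cF: "compact F" and neF: "F \<noteq> {}" and FX: "F \<subseteq> X" using calX_basic[OF F] by auto
  have uc: "uniformly_continuous_on X \<pi>" by (rule compact_uniformly_continuous[OF cont cX])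
  have same: "\<pi> x = \<pi> x'" if x: "x \<in> F" and x': "x' \<in> F" for x x'
  proof (rule ccontr)
    assume ne: "\<pi> x \<noteq> \<pi> x'"
    define \<epsilon> where "\<epsilon> = dist (\<pi> x) (\<pi> x')"
    have \<epsilon>: "\<epsilon> > 0" using ne unfolding \<epsilon>_def by simp
    have "\<epsilon>/2 > 0" using \<epsilon> by simp
    then have "\<exists>d>0. \<forall>v\<in>X. \<forall>u\<in>X. dist u v < d \<longrightarrow> dist (\<pi> u) (\<pi> v) < \<epsilon>/2"
      using uc unfolding uniformly_continuous_on_def by blast
    then obtain d where d: "d > 0" "\<And>u v. u \<in> X \<Longrightarrow> v \<in> X \<Longrightarrow> dist u v < d \<Longrightarrow> dist (\<pi> u) (\<pi> v) < \<epsilon>/2"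
      by blast
    have "\<forall>e>0. \<exists>y\<in>Xeq. hausdist F (fiber X \<pi> y) < e" using F unfolding calX_def by blast
    then obtain y' where y': "y' \<in> Xeq" "hausdist F (fiber X \<pi> y') < d"
      using d(1) by blast
    have near: "dist (\<pi> z) y' < \<epsilon>/2" if z: "z \<in> F" for z
    proof -
      have "infdist z (fiber X \<pi> y') < d"
        using hd_ge1[OF z cF fib_compact, of y'] y'(2) by linarith
      moreover obtain u where u: "u \<in> fiber X \<pi> y'" "infdist z (fiber X \<pi> y') = dist z u"
        using infdist_attained[OF fib_compact fib_ne[OF y'(1)]] by blast
      ultimately have "dist z u < d" by simp
      then have "dist (\<pi> z) (\<pi> u) < \<epsilon>/2" using d(2)[of z u] z FX u(1) fib_sub by auto
      moreover have "\<pi> u = y'" using u(1) unfolding fiber_def by auto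
      ultimately show ?thesis by simp
    qed
    have "dist (\<pi> x) (\<pi> x') \<le> dist (\<pi> x) y' + dist (\<pi> x') y'" by (rule dist_triangle2)
    also have "\<dots> < \<epsilon>" using near[OF x] near[OF x'] by simp
    finally show False unfolding \<epsilon>_def by simp
  qed
  obtain x0 where x0: "x0 \<in> F" using neF by auto
  have "\<pi> ` F \<subseteq> {\<pi> x0}" using same[OF _ x0] by blast
  then have im: "\<pi> ` F = {\<pi> x0}" using x0 by blast
  then have "pi_calX \<pi> F = \<pi> x0" unfolding pi_calX_def by simp
  moreover have "\<pi> x0 \<in> Xeq" using x0 FX img by auto
  ultimately show ?thesis using im by simp
qed

lemma pi_fib: "y \<in> Xeq \<Longrightarrow> pi_calX \<pi> (fiber X \<pi> y) = y"
proof -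
  assume y: "y \<in> Xeq"
  have "\<pi> ` fiber X \<pi> y = {y}" using fib_ne[OF y] unfolding fiber_def by auto
  then show ?thesis unfolding pi_calX_def by simp
qed

lemma closed_K:
  assumes cE: "compact E" and neE: "E \<noteq> {}"
  shows "closed (pi_calX \<pi> ` {F\<in>calX X \<pi> Xeq. hausdist E F \<le> s})"
  unfolding closed_sequential_limits
proof (intro allI impI, elim conjE)
  fix ys l assume ysK: "\<forall>n. ys n \<in> pi_calX \<pi> ` {F\<in>calX X \<pi> Xeq. hausdist E F \<le> s}" and ysl: "ys \<longlonglongrightarrow> l"
  have "\<forall>n. \<exists>F. F \<in> calX X \<pi> Xeq \<and> hausdist E F \<le> s \<and> ys n = pi_calX \<pi> F"
    using ysK by blast
  from choice[OF this] obtain F where "\<forall>n. F n \<in> calX X \<pi> Xeq \<and> hausdist E (F n) \<le> s \<and> ys n = pi_calX \<pi> (F n)"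
    by blast
  then have F: "\<And>n. F n \<in> calX X \<pi> Xeq" "\<And>n. hausdist E (F n) \<le> s" "\<And>n. ys n = pi_calX \<pi> (F n)"
    by auto
  have Fb: "compact (F n)" "F n \<noteq> {}" "F n \<subseteq> X" for n using calX_basic[OF F(1)] by auto
  obtain \<sigma> B where sB: "strict_mono \<sigma>" "B \<noteq> {}" "closed B" "B \<subseteq> X"
      "(\<lambda>k. hausdist (F (\<sigma> k)) B) \<longlonglongrightarrow> 0"
  proof -
    have "\<exists>s B. strict_mono s \<and> B \<noteq> {} \<and> closed B \<and> B \<subseteq> X \<and> (\<lambda>k. hausdist (F (s k)) B) \<longlonglongrightarrow> 0"
      by (rule hd_select[of X F, OF cX]) (use Fb compact_imp_closed[OF Fb(1)] in auto)
    then show ?thesis using that by blast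
  qed
  have cB: "compact B" using compact_closed_sub sB(3,4) by blast
  have hdn: "0 \<le> hausdist (F (\<sigma> k)) B" for k using hd_nonneg[OF Fb(2) Fb(1) cB] .
  have small: "\<exists>k. hausdist (F (\<sigma> k)) B < e" if epos: "e > 0" for e
  proof -
    obtain N where "\<And>n. n \<ge> N \<Longrightarrow> norm (hausdist (F (\<sigma> n)) B - 0) < e"
      using LIMSEQ_D[OF sB(5) epos] by blast
    then have "\<bar>hausdist (F (\<sigma> N)) B\<bar> < e" by simp
    then show ?thesis by (intro exI[of _ N]) simp
  qed
  have BcalX: "B \<in> calX X \<pi> Xeq"
    unfolding calX_def
  proof (intro CollectI conjI allI impI)
    fix e :: real assume e: "e > 0"
    obtain k where k: "hausdist (F (\<sigma> k)) B < e/2" using small[of "e/2"] e by auto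
    have "\<forall>e>0. \<exists>y\<in>Xeq. hausdist (F (\<sigma> k)) (fiber X \<pi> y) < e"
      using F(1)[of "\<sigma> k"] unfolding calX_def by blast
    moreover have "e/2 > 0" using e by simp
    ultimately obtain y' where y': "y' \<in> Xeq" "hausdist (F (\<sigma> k)) (fiber X \<pi> y') < e/2"
      by blast
    have "hausdist B (fiber X \<pi> y') \<le> hausdist B (F (\<sigma> k)) + hausdist (F (\<sigma> k)) (fiber X \<pi> y')"
      by (rule hd_triangle[OF sB(2) Fb(2) fib_ne[OF y'(1)] cB Fb(1) fib_compact])
    also have "\<dots> < e" using k y'(2) hd_sym[of B "F (\<sigma> k)"] by simp
    finally show "\<exists>y\<in>Xeq. hausdist B (fiber X \<pi> y) < e" using y'(1) by blast
  qed (use sB in auto)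
  have "hausdist E B \<le> s"
  proof (rule LIMSEQ_le_const)
    show "(\<lambda>k. s + hausdist (F (\<sigma> k)) B) \<longlonglongrightarrow> s" using tendsto_add[OF tendsto_const sB(5), of s] by simp
    have "hausdist E B \<le> s + hausdist (F (\<sigma> k)) B" for k
      using hd_triangle[OF neE Fb(2) sB(2) cE Fb(1) cB, of "\<sigma> k"] F(2)[of "\<sigma> k"] by linarith
    then show "\<exists>N. \<forall>n\<ge>N. hausdist E B \<le> s + hausdist (F (\<sigma> n)) B" by blast
  qed
  moreover have "pi_calX \<pi> B = l"
  proof -
    obtain b where b: "b \<in> B" using sB(2) by auto
    have "\<forall>k. \<exists>u. u \<in> F (\<sigma> k) \<and> infdist b (F (\<sigma> k)) = dist b u"
      using infdist_attained[OF Fb(1) Fb(2)] by blast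
    from choice[OF this] obtain u where "\<forall>k. u k \<in> F (\<sigma> k) \<and> infdist b (F (\<sigma> k)) = dist b (u k)"
      by blast
    then have u: "\<And>k. u k \<in> F (\<sigma> k)" "\<And>k. infdist b (F (\<sigma> k)) = dist b (u k)" by auto
    have le: "dist (u n) b \<le> hausdist (F (\<sigma> n)) B" for n
    proof -
      have "infdist b (F (\<sigma> n)) \<le> hausdist (F (\<sigma> n)) B" by (rule hd_ge2[OF b Fb(1) cB])
      moreover have "dist (u n) b = dist b (u n)" by (rule dist_commute)
      ultimately show ?thesis using u(2)[of n] by linarith
    qed
    have ev1: "\<forall>\<^sub>F n in sequentially. 0 \<le> dist (u n) b" by (intro always_eventually allI zero_le_dist)
    have ev2: "\<forall>\<^sub>F n in sequentially. dist (u n) b \<le> hausdist (F (\<sigma> n)) B"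
      by (intro always_eventually allI le)
    have "(\<lambda>k. dist (u k) b) \<longlonglongrightarrow> 0"
      by (rule tendsto_sandwich[OF ev1 ev2 tendsto_const sB(5)])
    then have ub: "u \<longlonglongrightarrow> b" by (rule iffD2[OF tendsto_dist_iff])
    have bX: "b \<in> X" using b sB(4) by auto
    have uX: "\<forall>k. u k \<in> X" using u(1) Fb(3) by blast
    have "\<forall>\<^sub>F k in sequentially. u k \<in> X" using uX by (intro always_eventually)
    from continuous_on_tendsto_compose[OF cont ub bX this]
    have "((\<pi> \<circ> u) \<longlonglongrightarrow> \<pi> b)" by (simp add: comp_def)
    moreover have "(\<pi> \<circ> u) = ys \<circ> \<sigma>"
    proof
      fix k
      have "\<pi> (u k) \<in> \<pi> ` F (\<sigma> k)" using u(1) by simp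
      then show "(\<pi> \<circ> u) k = (ys \<circ> \<sigma>) k" using calX_pt[OF F(1)[of "\<sigma> k"]] F(3)[of "\<sigma> k"] by simp
    qed
    moreover have "(ys \<circ> \<sigma>) \<longlonglongrightarrow> l" by (rule LIMSEQ_subseq_LIMSEQ[OF ysl sB(1)])
    ultimately have "\<pi> b = l" using LIMSEQ_unique[of "\<pi> \<circ> u" "\<pi> b" l] by simp
    moreover have "\<pi> b \<in> \<pi> ` B" using b by simp
    ultimately show ?thesis using calX_pt[OF BcalX] by simp
  qed
  ultimately show "l \<in> pi_calX \<pi> ` {F\<in>calX X \<pi> Xeq. hausdist E F \<le> s}"
    using BcalX by (intro image_eqI[of _ _ B]) auto
qed

lemma ball_union:
  "pi_calX \<pi> ` ball_calX X \<pi> Xeq E r =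
     (\<Union>m. pi_calX \<pi> ` {F\<in>calX X \<pi> Xeq. hausdist E F \<le> r - 1/real (Suc m)})"
proof (intro equalityI subsetI)
  fix y assume "y \<in> pi_calX \<pi> ` ball_calX X \<pi> Xeq E r"
  then obtain F where F: "F \<in> calX X \<pi> Xeq" "hausdist E F < r" "y = pi_calX \<pi> F"
    unfolding ball_calX_def by auto
  obtain m where m: "inverse (real (Suc m)) < r - hausdist E F"
    using reals_Archimedean F(2) by (metis diff_gt_0_iff_gt)
  then have "hausdist E F \<le> r - 1/real (Suc m)" by (simp add: inverse_eq_divide)
  then show "y \<in> (\<Union>m. pi_calX \<pi> ` {F\<in>calX X \<pi> Xeq. hausdist E F \<le> r - 1/real (Suc m)})"
    using F by blast
next
  fix y assume "y \<in> (\<Union>m. pi_calX \<pi> ` {F\<in>calX X \<pi> Xeq. hausdist E F \<le> r - 1/real (Suc m)})"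
  then obtain m F where F: "F \<in> calX X \<pi> Xeq" "hausdist E F \<le> r - 1/real (Suc m)" "y = pi_calX \<pi> F"
    by auto
  have "(0::real) < 1/real (Suc m)" by simp
  then have "hausdist E F < r" using F(2) by linarith
  then show "y \<in> pi_calX \<pi> ` ball_calX X \<pi> Xeq E r" unfolding ball_calX_def using F by blast
qed

lemma closed_sub_sets:
  assumes "closed C" "C \<subseteq> Xeq"
  shows "C \<in> sets (restrict_space borel Xeq)"
proof -
  have "Xeq \<inter> space borel \<in> sets borel" using compact_imp_closed[OF cXeq] by simp
  then show ?thesis using assms by (subst sets_restrict_space_iff) auto
qed

lemma ball_sets:
  assumes cE: "compact E" and neE: "E \<noteq> {}"
  shows "pi_calX \<pi> ` ball_calX X \<pi> Xeq E r \<in> sets (restrict_space borel Xeq)"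
proof -
  have "pi_calX \<pi> ` {F\<in>calX X \<pi> Xeq. hausdist E F \<le> r - 1/real (Suc m)} \<in> sets (restrict_space borel Xeq)" for m
    using closed_K[OF cE neE] calX_pt by (intro closed_sub_sets) auto
  then show ?thesis unfolding ball_union by (intro sets.countable_UN) auto
qed

end

context hsetting
begin

lemma img_closed:
  assumes "closed S"
  shows "closed (\<pi> ` (X \<inter> S))"
proof -
  have "compact (X \<inter> S)" using compact_Int_closed[OF cX assms] .
  moreover have "continuous_on (X \<inter> S) \<pi>" using continuous_on_subset[OF cont] by blast
  ultimately show ?thesis using compact_continuous_image compact_imp_closed by blast
qed

lemma T_repr:
  assumes finE: "finite E" and neE: "E \<noteq> {}"
  shows "\<exists>W Q. open W \<and> (\<forall>m::nat. closed (Q m)) \<and>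
     {y\<in>Xeq. hausdist E (fiber X \<pi> y) < q} = Xeq \<inter> W \<inter> (\<Union>m. Q m)"
proof -
  have cE: "compact E" using finE by (rule finite_imp_compact)
  define C where "C = \<pi> ` (X \<inter> {x. q \<le> infdist x E})"
  have clC: "closed C" unfolding C_def
  proof (rule img_closed)
    have "closed ((\<lambda>x. infdist x E) -` {q..})"
      by (intro continuous_closed_vimage closed_atLeast continuous_intros)
    moreover have "(\<lambda>x. infdist x E) -` {q..} = {x. q \<le> infdist x E}" by auto
    ultimately show "closed {x. q \<le> infdist x E}" by simp
  qed
  define Q where "Q = (\<lambda>m::nat. (\<Inter>a\<in>E. \<pi> ` (X \<inter> {x. dist a x \<le> q - 1/real (Suc m)})))"
  have clQ: "closed (Q m)" for m unfolding Q_def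
  proof (intro closed_INT ballI img_closed)
    fix a
    have "closed ((\<lambda>x. dist a x) -` {..q - 1/real (Suc m)})"
      by (intro continuous_closed_vimage closed_atMost continuous_intros)
    moreover have "(\<lambda>x. dist a x) -` {..q - 1/real (Suc m)} = {x. dist a x \<le> q - 1/real (Suc m)}" by auto
    ultimately show "closed {x. dist a x \<le> q - 1/real (Suc m)}" by simp
  qed
  have eq: "{y\<in>Xeq. hausdist E (fiber X \<pi> y) < q} = Xeq \<inter> (- C) \<inter> (\<Union>m. Q m)"
  proof (intro equalityI subsetI)
    fix y assume "y \<in> {y\<in>Xeq. hausdist E (fiber X \<pi> y) < q}"
    then have y: "y \<in> Xeq" and hq: "hausdist E (fiber X \<pi> y) < q" by auto
    have "y \<notin> C"
    proof
      assume "y \<in> C"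
      then obtain x where x: "x \<in> X" "q \<le> infdist x E" "y = \<pi> x" unfolding C_def by auto
      then have "x \<in> fiber X \<pi> y" unfolding fiber_def by auto
      then have "infdist x E \<le> hausdist E (fiber X \<pi> y)" by (rule hd_ge2[OF _ cE fib_compact])
      then show False using x(2) hq by linarith
    qed
    obtain m where m: "inverse (real (Suc m)) < q - hausdist E (fiber X \<pi> y)"
      using reals_Archimedean hq by (metis diff_gt_0_iff_gt)
    have "y \<in> Q m" unfolding Q_def
    proof (intro INT_I)
      fix a assume a: "a \<in> E"
      obtain u where u: "u \<in> fiber X \<pi> y" "infdist a (fiber X \<pi> y) = dist a u"
        using infdist_attained[OF fib_compact fib_ne[OF y]] by blast
      have "infdist a (fiber X \<pi> y) \<le> hausdist E (fiber X \<pi> y)" by (rule hd_ge1[OF a cE fib_compact])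
      then have "dist a u \<le> q - 1/real (Suc m)" using u(2) m by (simp add: inverse_eq_divide)
      moreover have "u \<in> X" "\<pi> u = y" using u(1) unfolding fiber_def by auto
      ultimately show "y \<in> \<pi> ` (X \<inter> {x. dist a x \<le> q - 1/real (Suc m)})" by force
    qed
    then show "y \<in> Xeq \<inter> (- C) \<inter> (\<Union>m. Q m)" using y \<open>y \<notin> C\<close> by blast
  next
    fix y assume "y \<in> Xeq \<inter> (- C) \<inter> (\<Union>m. Q m)"
    then obtain m where y: "y \<in> Xeq" "y \<notin> C" "y \<in> Q m" by blast
    have lt: "infdist x E < q" if x: "x \<in> fiber X \<pi> y" for x
    proof (rule ccontr)
      assume "\<not> infdist x E < q"
      then have "x \<in> X \<inter> {x. q \<le> infdist x E}" using x unfolding fiber_def by auto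
      moreover have "\<pi> x = y" using x unfolding fiber_def by auto
      ultimately have "y \<in> C" unfolding C_def by force
      then show False using y(2) by simp
    qed
    have "continuous_on (fiber X \<pi> y) (\<lambda>x. infdist x E)" by (intro continuous_intros)
    then obtain x1 where x1: "x1 \<in> fiber X \<pi> y" "\<And>x. x \<in> fiber X \<pi> y \<Longrightarrow> infdist x E \<le> infdist x1 E"
      using continuous_attains_sup[OF fib_compact fib_ne[OF y(1)]] by blast
    define c where "c = max (infdist x1 E) (q - 1/real (Suc m))"
    have "c < q" unfolding c_def using lt[OF x1(1)] by simp
    have "hausdist E (fiber X \<pi> y) \<le> c"
    proof (rule hd_le[OF neE fib_ne[OF y(1)]])
      fix a assume a: "a \<in> E"
      have "y \<in> \<pi> ` (X \<inter> {x. dist a x \<le> q - 1/real (Suc m)})" using y(3) a unfolding Q_def by blast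
      then obtain u where u: "u \<in> X" "dist a u \<le> q - 1/real (Suc m)" "y = \<pi> u" by blast
      then have "u \<in> fiber X \<pi> y" unfolding fiber_def by auto
      then have "infdist a (fiber X \<pi> y) \<le> dist a u" by (rule infdist_le)
      then show "infdist a (fiber X \<pi> y) \<le> c" using u(2) unfolding c_def by linarith
    next
      fix x assume "x \<in> fiber X \<pi> y"
      then show "infdist x E \<le> c" using x1(2) unfolding c_def by fastforce
    qed
    then show "y \<in> {y\<in>Xeq. hausdist E (fiber X \<pi> y) < q}" using \<open>c < q\<close> y(1) by simp
  qed
  show ?thesis
    by (rule exI[of _ "- C"], rule exI[of _ Q]) (use eq clQ clC in auto)
qed

lemma T_props:
  assumes finE: "finite E" and neE: "E \<noteq> {}"
  shows "{y\<in>Xeq. hausdist E (fiber X \<pi> y) < q} \<in> sets (restrict_space borel Xeq)"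
    and "fsigma_in (top_of_set Xeq) {y\<in>Xeq. hausdist E (fiber X \<pi> y) < q}"
proof -
  obtain W Q where OQ: "open W" "\<And>m::nat. closed (Q m)"
    "{y\<in>Xeq. hausdist E (fiber X \<pi> y) < q} = Xeq \<inter> W \<inter> (\<Union>m. Q m)"
    using T_repr[OF finE neE, of q] by blast
  have "W \<inter> (\<Union>m. Q m) \<in> sets borel" using OQ(1,2) by auto
  then have "Xeq \<inter> (W \<inter> (\<Union>m. Q m)) \<in> sets (restrict_space borel Xeq)"
    unfolding sets_restrict_space by blast
  then show "{y\<in>Xeq. hausdist E (fiber X \<pi> y) < q} \<in> sets (restrict_space borel Xeq)"
    using OQ(3) by (simp add: Int_assoc)
  have met: "metrizable_space (top_of_set Xeq)"
    by (intro metrizable_space_subtopology metrizable_space_euclidean)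
  have f1: "fsigma_in (top_of_set Xeq) (Xeq \<inter> W)"
    by (intro open_imp_fsigma_in met openin_open_Int OQ(1))
  have f2: "fsigma_in (top_of_set Xeq) (\<Union>(range (\<lambda>m. Xeq \<inter> Q m)))"
    by (intro fsigma_in_Union) (auto intro: closed_imp_fsigma_in closedin_closed_Int OQ(2))
  have "Xeq \<inter> W \<inter> (\<Union>m. Q m) = (Xeq \<inter> W) \<inter> \<Union>(range (\<lambda>m. Xeq \<inter> Q m))" by blast
  then show "fsigma_in (top_of_set Xeq) {y\<in>Xeq. hausdist E (fiber X \<pi> y) < q}"
    using fsigma_in_Int[OF f1 f2] OQ(3) by simp
qed

end

lemma min_factor:
  assumes minX: "minimal_tds X act" and fm: "factor_map X act Xeq actY \<pi>"
  shows "\<forall>A. A \<subseteq> Xeq \<and> A \<noteq> {} \<and> closed A \<and> (\<forall>g. actY g ` A \<subseteq> A) \<longrightarrow> A = Xeq"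
proof (intro allI impI, elim conjE)
  fix A assume AX: "A \<subseteq> Xeq" and neA: "A \<noteq> {}" and clA: "closed A" and inv: "\<forall>g. actY g ` A \<subseteq> A"
  have tX: "tds X act" and cont: "continuous_on X \<pi>" and img: "\<pi> ` X = Xeq"
    and eqv: "\<forall>g. \<forall>x\<in>X. \<pi> (act g x) = actY g (\<pi> x)"
    using fm unfolding factor_map_def by auto
  have cX: "compact X" and actX: "\<And>g. act g ` X \<subseteq> X" using tX unfolding tds_def by auto
  have minP: "\<And>B. B \<subseteq> X \<Longrightarrow> B \<noteq> {} \<Longrightarrow> closed B \<Longrightarrow> (\<forall>g. act g ` B \<subseteq> B) \<Longrightarrow> B = X"
    using minX unfolding minimal_tds_def by blast
  define B where "B = X \<inter> \<pi> -` A"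
  have "B = X"
  proof (rule minP)
    show "B \<subseteq> X" unfolding B_def by auto
    obtain a where "a \<in> A" using neA by auto
    then obtain x where "x \<in> X" "\<pi> x = a" using AX img by auto
    then show "B \<noteq> {}" unfolding B_def using \<open>a \<in> A\<close> by auto
    show "closed B" unfolding B_def by (rule continuous_closed_preimage[OF cont compact_imp_closed[OF cX] clA])
    show "\<forall>g. act g ` B \<subseteq> B"
    proof (intro allI subsetI)
      fix g z assume "z \<in> act g ` B"
      then obtain x where x: "x \<in> X" "\<pi> x \<in> A" "z = act g x" unfolding B_def by auto
      have "z \<in> X" using actX x by auto
      moreover have "\<pi> z = actY g (\<pi> x)" using eqv x by auto
      moreover have "actY g (\<pi> x) \<in> A" using inv x(2) by auto
      ultimately show "z \<in> B" unfolding B_def by auto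
    qed
  qed
  then have "Xeq \<subseteq> A" using img unfolding B_def by auto
  then show "A = Xeq" using AX by auto
qed

lemma full_support:
  assumes tY: "tds Xeq actY"
    and minY: "\<forall>A. A \<subseteq> Xeq \<and> A \<noteq> {} \<and> closed A \<and> (\<forall>g. actY g ` A \<subseteq> A) \<longrightarrow> A = Xeq"
    and inv: "invariant_prob Xeq actY \<nu>"
    and U: "open U" "U \<inter> Xeq \<noteq> {}"
  shows "measure \<nu> (U \<inter> Xeq) > 0"
proof -
  have P: "prob_space \<nu>" and sp: "space \<nu> = Xeq" and st: "sets \<nu> = sets (restrict_space borel Xeq)"
    and iv: "\<And>g A. A \<in> sets \<nu> \<Longrightarrow> measure \<nu> {y\<in>Xeq. actY g y \<in> A} = measure \<nu> A"
    using inv unfolding invariant_prob_def by auto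
  interpret prob_space \<nu> by (rule P)
  have cY: "compact Xeq" and contY: "\<And>g. continuous_on Xeq (actY g)" and actin: "\<And>g. actY g ` Xeq \<subseteq> Xeq"
    using tY unfolding tds_def by auto
  have opens: "V \<inter> Xeq \<in> sets \<nu>" if "open V" for V
  proof -
    have "V \<in> sets borel" using that by simp
    then have "Xeq \<inter> V \<in> sets (restrict_space borel Xeq)" unfolding sets_restrict_space by blast
    then show ?thesis using st by (simp add: Int_commute)
  qed
  define N where "N = {V. open V \<and> measure \<nu> (V \<inter> Xeq) = 0}"
  define Z where "Z = Xeq - \<Union>N"
  have "Z = Xeq"
  proof (rule minY[rule_format], intro conjI)
    show "Z \<subseteq> Xeq" unfolding Z_def by auto
    have "open (\<Union>N)" unfolding N_def by auto
    then show "closed Z" unfolding Z_def using compact_imp_closed[OF cY] by (simp add: Diff_eq closed_Int closed_Compl)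
    show "Z \<noteq> {}"
    proof
      assume "Z = {}"
      then have "Xeq \<subseteq> \<Union>N" unfolding Z_def by auto
      then obtain N' where N': "N' \<subseteq> N" "finite N'" "Xeq \<subseteq> \<Union>N'"
        using compactE[OF cY] unfolding N_def by blast
      have "Xeq = (\<Union>V\<in>N'. V \<inter> Xeq)" using N'(3) by auto
      then have "measure \<nu> Xeq \<le> (\<Sum>V\<in>N'. measure \<nu> (V \<inter> Xeq))"
        using finite_measure_subadditive_finite[OF N'(2), of "\<lambda>V. V \<inter> Xeq"] opens N'(1)
        unfolding N_def by auto
      also have "\<dots> = 0" using N'(1) unfolding N_def by (intro sum.neutral) auto
      finally have "measure \<nu> Xeq \<le> 0" .
      moreover have "measure \<nu> Xeq = 1" using prob_space sp by simp
      ultimately show False by simp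
    qed
    show "\<forall>g. actY g ` Z \<subseteq> Z"
    proof (intro allI subsetI)
      fix g w assume "w \<in> actY g ` Z"
      then obtain z where z: "z \<in> Z" "w = actY g z" by auto
      have zY: "z \<in> Xeq" using z(1) unfolding Z_def by auto
      have wY: "w \<in> Xeq" using actin zY z(2) by auto
      show "w \<in> Z"
      proof (rule ccontr)
        assume "w \<notin> Z"
        then obtain V where V: "V \<in> N" "w \<in> V" using wY unfolding Z_def by auto
        have oV: "open V" and mV: "measure \<nu> (V \<inter> Xeq) = 0" using V(1) unfolding N_def by auto
        obtain A where A: "open A" "A \<inter> Xeq = actY g -` V \<inter> Xeq"
          using contY[of g] oV unfolding continuous_on_open_invariant by blast
        have "{y\<in>Xeq. actY g y \<in> V \<inter> Xeq} = A \<inter> Xeq" using A(2) actin by auto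
        then have "measure \<nu> (A \<inter> Xeq) = measure \<nu> (V \<inter> Xeq)"
          using iv[OF opens[OF oV], of g] by simp
        then have "A \<in> N" using A(1) mV unfolding N_def by simp
        moreover have "z \<in> A" using A(2) zY z(2) V(2) by auto
        ultimately show False using z(1) unfolding Z_def by auto
      qed
    qed
  qed
  show ?thesis
  proof (rule ccontr)
    assume "\<not> measure \<nu> (U \<inter> Xeq) > 0"
    then have "measure \<nu> (U \<inter> Xeq) = 0" using measure_nonneg[of \<nu> "U \<inter> Xeq"] by linarith
    then have "U \<in> N" using U(1) unfolding N_def by simp
    then have "U \<inter> Z = {}" unfolding Z_def by auto
    then show False using \<open>Z = Xeq\<close> U(2) by auto
  qed
qed

theorem lemma3p2:
  fixes X :: "'x::metric_space set" and act :: "'g::{group_add,countable} \<Rightarrow> 'x \<Rightarrow> 'x"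
    and Xeq :: "'y::metric_space set" and actY :: "'g \<Rightarrow> 'y \<Rightarrow> 'y"
    and \<pi> :: "'x \<Rightarrow> 'y" and \<nu> :: "'y measure"
  assumes "infinite (UNIV :: 'g set)"
    and "minimal_tds X act"
    and "max_eq_factor X act Xeq actY \<pi>"
    and "invariant_prob Xeq actY \<nu>"
    and "\<forall>\<mu>. invariant_prob Xeq actY \<mu> \<longrightarrow> \<mu> = \<nu>"
  defines "Y \<equiv> {y\<in>Xeq. fiber X \<pi> y \<in> calX_meas X \<pi> Xeq \<nu>}"
  shows "Xeq \<subseteq> closure Y \<and> gdelta_in (top_of_set Xeq) Y \<and> Y \<in> sets \<nu> \<and> measure \<nu> Y = 1"
proof -
  have fm: "factor_map X act Xeq actY \<pi>" using assms(3) unfolding max_eq_factor_def by auto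
  have tX: "tds X act" and tY: "tds Xeq actY" and cont: "continuous_on X \<pi>" and img: "\<pi> ` X = Xeq"
    using fm unfolding factor_map_def by auto
  have cX: "compact X" using tX unfolding tds_def by auto
  interpret hsetting X \<pi> Xeq by unfold_locales (use cX cont img in auto)
  have P: "prob_space \<nu>" and sp: "space \<nu> = Xeq" and st: "sets \<nu> = sets (restrict_space borel Xeq)"
    using assms(4) unfolding invariant_prob_def by auto
  interpret prob_space \<nu> by (rule P)
  have minY: "\<forall>A. A \<subseteq> Xeq \<and> A \<noteq> {} \<and> closed A \<and> (\<forall>g. actY g ` A \<subseteq> A) \<longrightarrow> A = Xeq"
    by (rule min_factor[OF assms(2) fm])
  have "\<forall>n::nat. \<exists>K. finite K \<and> K \<subseteq> X \<and> X \<subseteq> (\<Union>x\<in>K. ball x (1/(Suc n)))"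
    using seq_compact_imp_totally_bounded[OF compact_imp_seq_compact[OF cX]] by simp
  then obtain Nt where Nt: "\<And>n. finite (Nt n)" "\<And>n. Nt n \<subseteq> X" "\<And>n. X \<subseteq> (\<Union>x\<in>Nt n. ball x (1/(Suc n)))"
    by metis
  define PP where "PP = (\<lambda>E q. pi_calX \<pi> ` ball_calX X \<pi> Xeq E q)"
  define T where "T = (\<lambda>E q. {y\<in>Xeq. hausdist E (fiber X \<pi> y) < q})"
  define J where "J = (\<Union>n. {E. E \<subseteq> Nt n \<and> E \<noteq> {}}) \<times> (\<rat> :: real set)"
  define I where "I = {i\<in>J. measure \<nu> (PP (fst i) (snd i)) = 0}"
  have Jfin: "finite (fst i) \<and> fst i \<noteq> {} \<and> compact (fst i)" if "i \<in> J" for i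
  proof -
    have "fst i \<in> (\<Union>n. {E. E \<subseteq> Nt n \<and> E \<noteq> {}})" using that unfolding J_def by (simp add: mem_Times_iff)
    then obtain n where "fst i \<subseteq> Nt n" "fst i \<noteq> {}" by blast
    moreover then have "finite (fst i)" using Nt(1) finite_subset by blast
    ultimately show ?thesis using finite_imp_compact by blast
  qed
  have cJ: "countable J"
  proof -
    have "countable {E. E \<subseteq> Nt n \<and> E \<noteq> {}}" for n
    proof -
      have "{E. E \<subseteq> Nt n \<and> E \<noteq> {}} \<subseteq> Pow (Nt n)" by auto
      moreover have "finite (Pow (Nt n))" using Nt(1) by simp
      ultimately show ?thesis using countable_finite finite_subset by blast
    qed
    then show ?thesis unfolding J_def using countable_rat by (intro countable_SIGMA countable_UN) auto
  qed
  have cI: "countable I" unfolding I_def using cJ by (rule countable_subset[rotated]) auto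
  have PPsets: "PP E q \<in> sets \<nu>" if "compact E" "E \<noteq> {}" for E q
    unfolding PP_def st by (rule ball_sets[OF that])
  have ball_mono: "ball_calX X \<pi> Xeq E q \<subseteq> ball_calX X \<pi> Xeq E' q'"
    if "compact E" "E \<noteq> {}" "compact E'" "E' \<noteq> {}" "hausdist E' E + q \<le> q'" for E E' q q'
  proof
    fix F assume F: "F \<in> ball_calX X \<pi> Xeq E q"
    then have FC: "F \<in> calX X \<pi> Xeq" and h: "hausdist E F < q" unfolding ball_calX_def by auto
    have "compact F" "F \<noteq> {}" using calX_basic[OF FC] by auto
    then have "hausdist E' F \<le> hausdist E' E + hausdist E F"
      using hd_triangle[of E' E F] that by auto
    then have "hausdist E' F < q'" using h that(5) by linarith
    then show "F \<in> ball_calX X \<pi> Xeq E' q'" unfolding ball_calX_def using FC by auto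
  qed
  have key: "Xeq - Y = (\<Union>i\<in>I. T (fst i) (snd i))"
  proof (intro equalityI subsetI)
    fix y assume "y \<in> Xeq - Y"
    then have y: "y \<in> Xeq" and nY: "fiber X \<pi> y \<notin> calX_meas X \<pi> Xeq \<nu>" unfolding Y_def by auto
    define Fy where "Fy = fiber X \<pi> y"
    have cFy: "compact Fy" and neFy: "Fy \<noteq> {}" unfolding Fy_def using fib_compact fib_ne[OF y] by auto
    have "\<not> (\<forall>e>0. measure \<nu> (PP Fy e) > 0)"
      using nY fib_calX[OF y] unfolding calX_meas_def PP_def Fy_def by auto
    then obtain e where e0: "e > 0" "\<not> measure \<nu> (PP Fy e) > 0" by blast
    then have e: "e > 0" "measure \<nu> (PP Fy e) = 0" using measure_nonneg[of \<nu> "PP Fy e"] by linarith+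
    obtain n where n: "inverse (real (Suc n)) < e/3" using reals_Archimedean e(1) by (metis divide_pos_pos zero_less_numeral)
    define E where "E = {d\<in>Nt n. infdist d Fy < 1/real (Suc n)}"
    have near: "\<exists>d\<in>E. dist x d < 1/real (Suc n)" if x: "x \<in> Fy" for x
    proof -
      have "x \<in> X" using x fib_sub unfolding Fy_def by auto
      then obtain d where d: "d \<in> Nt n" "x \<in> ball d (1/real (Suc n))" using Nt(3)[of n] by auto
      then have dx: "dist x d < 1/real (Suc n)" by (simp add: dist_commute)
      have "infdist d Fy \<le> dist d x" using x by (rule infdist_le)
      then have "d \<in> E" unfolding E_def using d(1) dx by (simp add: dist_commute)
      then show ?thesis using dx by blast
    qed
    have neE: "E \<noteq> {}" using near neFy by blast
    have finE: "finite E" unfolding E_def using Nt(1) by simp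
    have cE: "compact E" using finE by (rule finite_imp_compact)
    have hE: "hausdist E Fy \<le> 1/real (Suc n)"
    proof (rule hd_le[OF neE neFy])
      fix d assume "d \<in> E" then show "infdist d Fy \<le> 1/real (Suc n)" unfolding E_def by auto
    next
      fix x assume "x \<in> Fy"
      then obtain d where "d \<in> E" "dist x d < 1/real (Suc n)" using near by blast
      then show "infdist x E \<le> 1/real (Suc n)" using infdist_le[of d E x] by linarith
    qed
    have hE3: "hausdist E Fy < e/3" using hE n by (simp add: inverse_eq_divide)
    obtain q where q: "q \<in> \<rat>" "e/3 < q" "q < 2*e/3" using Rats_dense_in_real[of "e/3" "2*e/3"] e(1) by auto
    have EJ: "(E, q) \<in> J" unfolding J_def E_def using q(1) neE unfolding E_def by auto
    have "ball_calX X \<pi> Xeq E q \<subseteq> ball_calX X \<pi> Xeq Fy e"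
      using hE3 q hd_sym[of Fy E] by (intro ball_mono[OF cE neE cFy neFy]) auto
    then have "PP E q \<subseteq> PP Fy e" unfolding PP_def by auto
    then have "measure \<nu> (PP E q) \<le> measure \<nu> (PP Fy e)"
      by (rule finite_measure_mono) (rule PPsets[OF cFy neFy])
    then have "measure \<nu> (PP E q) = 0" using e(2) measure_nonneg[of \<nu> "PP E q"] by linarith
    then have "(E, q) \<in> I" unfolding I_def using EJ by simp
    moreover have "y \<in> T E q" unfolding T_def using y hE3 q(2) unfolding Fy_def by simp
    ultimately show "y \<in> (\<Union>i\<in>I. T (fst i) (snd i))" by force
  next
    fix y assume "y \<in> (\<Union>i\<in>I. T (fst i) (snd i))"
    then obtain E q where Eq: "(E, q) \<in> I" "y \<in> T E q" by auto
    then have y: "y \<in> Xeq" and hq: "hausdist E (fiber X \<pi> y) < q" unfolding T_def by auto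
    have EJ: "(E, q) \<in> J" and m0: "measure \<nu> (PP E q) = 0" using Eq(1) unfolding I_def by auto
    have cE: "compact E" and neE: "E \<noteq> {}" using Jfin[OF EJ] by auto
    define e where "e = q - hausdist E (fiber X \<pi> y)"
    have e: "e > 0" unfolding e_def using hq by simp
    have "ball_calX X \<pi> Xeq (fiber X \<pi> y) e \<subseteq> ball_calX X \<pi> Xeq E q"
      by (rule ball_mono[OF fib_compact fib_ne[OF y] cE neE]) (simp add: e_def)
    then have "PP (fiber X \<pi> y) e \<subseteq> PP E q" unfolding PP_def by auto
    then have "measure \<nu> (PP (fiber X \<pi> y) e) \<le> measure \<nu> (PP E q)"
      by (rule finite_measure_mono) (rule PPsets[OF cE neE])
    then have "\<not> measure \<nu> (PP (fiber X \<pi> y) e) > 0" using m0 by simp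
    then have "fiber X \<pi> y \<notin> calX_meas X \<pi> Xeq \<nu>" using e unfolding calX_meas_def PP_def by auto
    then show "y \<in> Xeq - Y" using y unfolding Y_def by auto
  qed
  have Tsets: "T (fst i) (snd i) \<in> sets \<nu>" and Tfs: "fsigma_in (top_of_set Xeq) (T (fst i) (snd i))"
    if "i \<in> I" for i
  proof -
    have "i \<in> J" using that unfolding I_def by auto
    then have "finite (fst i)" "fst i \<noteq> {}" using Jfin by auto
    then show "T (fst i) (snd i) \<in> sets \<nu>" "fsigma_in (top_of_set Xeq) (T (fst i) (snd i))"
      unfolding T_def st using T_props by auto
  qed
  have YX: "Y \<subseteq> Xeq" unfolding Y_def by auto
  have compl_sets: "Xeq - Y \<in> sets \<nu>" unfolding key using cI Tsets by (intro sets.countable_UN'') auto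
  have Yeq: "Y = space \<nu> - (Xeq - Y)" using YX sp by auto
  have Ysets: "Y \<in> sets \<nu>" using compl_sets Yeq by (metis sets.compl_sets)
  have null: "Xeq - Y \<in> null_sets \<nu>"
  proof -
    have "(\<Union>i\<in>I. PP (fst i) (snd i)) \<in> null_sets \<nu>"
    proof (rule null_sets_UN'[OF cI])
      fix i assume i: "i \<in> I"
      then have "i \<in> J" "measure \<nu> (PP (fst i) (snd i)) = 0" unfolding I_def by auto
      then have "PP (fst i) (snd i) \<in> sets \<nu>" "measure \<nu> (PP (fst i) (snd i)) = 0"
        using Jfin PPsets by auto
      then show "PP (fst i) (snd i) \<in> null_sets \<nu>" by (simp add: emeasure_eq_measure null_setsI)
    qed
    moreover have "Xeq - Y \<subseteq> (\<Union>i\<in>I. PP (fst i) (snd i))"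
    proof
      fix y assume "y \<in> Xeq - Y"
      then obtain i where i: "i \<in> I" "y \<in> T (fst i) (snd i)" unfolding key by auto
      then have y: "y \<in> Xeq" "hausdist (fst i) (fiber X \<pi> y) < snd i" unfolding T_def by auto
      have "fiber X \<pi> y \<in> ball_calX X \<pi> Xeq (fst i) (snd i)"
        unfolding ball_calX_def using fib_calX[OF y(1)] y(2) by auto
      then have "pi_calX \<pi> (fiber X \<pi> y) \<in> PP (fst i) (snd i)" unfolding PP_def by auto
      then show "y \<in> (\<Union>i\<in>I. PP (fst i) (snd i))" using pi_fib[OF y(1)] i(1) by auto
    qed
    ultimately show ?thesis using null_sets_subset compl_sets by blast
  qed
  have m0: "measure \<nu> (Xeq - Y) = 0" using null by (rule measure_eq_0_null_sets)
  have m1: "measure \<nu> Y = 1"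
  proof -
    have "measure \<nu> (space \<nu> - (Xeq - Y)) = 1 - measure \<nu> (Xeq - Y)"
      using prob_compl[OF compl_sets] by simp
    then show ?thesis using m0 Yeq by simp
  qed
  have gd: "gdelta_in (top_of_set Xeq) Y"
  proof -
    have "fsigma_in (top_of_set Xeq) (\<Union>i\<in>I. T (fst i) (snd i))"
      using cI Tfs by (intro fsigma_in_Union) auto
    then show ?thesis unfolding gdelta_in_fsigma_in using YX key by simp
  qed
  have dense: "Xeq \<subseteq> closure Y"
  proof
    fix y0 assume y0: "y0 \<in> Xeq"
    show "y0 \<in> closure Y"
      unfolding closure_approachable
    proof (intro allI impI)
      fix \<epsilon> :: real assume \<epsilon>: "\<epsilon> > 0"
      show "\<exists>y\<in>Y. dist y y0 < \<epsilon>"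
      proof (rule ccontr)
        assume no: "\<not> (\<exists>y\<in>Y. dist y y0 < \<epsilon>)"
        have "ball y0 \<epsilon> \<inter> Xeq \<subseteq> Xeq - Y" using no by (auto simp: dist_commute)
        then have "measure \<nu> (ball y0 \<epsilon> \<inter> Xeq) \<le> measure \<nu> (Xeq - Y)"
          by (rule finite_measure_mono) (rule compl_sets)
        moreover have "measure \<nu> (ball y0 \<epsilon> \<inter> Xeq) > 0"
        proof (rule full_support[OF tY minY assms(4)])
          have "y0 \<in> ball y0 \<epsilon> \<inter> Xeq" using y0 \<epsilon> by simp
          then show "ball y0 \<epsilon> \<inter> Xeq \<noteq> {}" by blast
        qed simp
        ultimately show False using m0 by simp
      qed
    qed
  qed
  show ?thesis using dense gd Ysets m1 by blast
qed

end
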